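(* Let $\mathcal{T}_{\mathcal{I}\times\mathcal{J}}$ be a $C_{\mathrm{sp}}$-sparse block tree for the cluster trees $\mathcal{T}_{\mathcal{I}}$ and $\mathcal{T}_{\mathcal{J}}$, and let $\mathcal{T}_x$ be a subtree of $\mathcal{T}_{\mathcal{J}}$. Let $\mathcal{B}\subseteq\mathcal{T}_{\mathcal{I}\times\mathcal{J}}$ be the smallest set of blocks such that $(\mathrm{root}(\mathcal{T}_{\mathcal{I}}),\mathrm{root}(\mathcal{T}_{\mathcal{J}}))\in\mathcal{B}$ and such that whenever $b=(t,s)\in\mathcal{B}$, $b$ is not a leaf of $\mathcal{T}_{\mathcal{I}\times\mathcal{J}}$, and $s$ is not a leaf of $\mathcal{T}_x$, all sons of $b$ in $\mathcal{T}_{\mathcal{I}\times\mathcal{J}}$ belong to $\mathcal{B}$. Let $\mathcal{T}_y := \{t\in\mathcal{T}_{\mathcal{I}} : (t,s)\in\mathcal{B}\text{ for some } s\}$. Then $s\in\mathcal{T}_x$ for every $(t,s)\in\mathcal{B}$, $\mathcal{T}_y$ is a subtree of $\mathcal{T}_{\mathcal{I}}$, and $$\#\mathcal{B}\le C_{\mathrm{sp}}\,\#\mathcal{T}_x,\qquad \#\mathcal{T}_y\le C_{\mathrm{sp}}\,\#\mathcal{T}_x.$$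
   Context: A cluster tree for a finite index set $\mathcal{I}$ is a finite rooted tree $\mathcal{T}_{\mathcal{I}}$ whose nodes $t$ (clusters) carry labels $\hat t\subseteq\mathcal{I}$, such that the root is labeled $\mathcal{I}$ and, for every cluster $t$ with a nonempty set $\mathrm{sons}(t)$ of sons, $\hat t$ is the disjoint union of the labels of its sons. A subtree $\mathcal{T}_x$ of $\mathcal{T}_{\mathcal{J}}$ is a set of clusters of $\mathcal{T}_{\mathcal{J}}$ containing the root, forming a tree with the same labels, such that every cluster of $\mathcal{T}_x$ has in $\mathcal{T}_x$ either no sons or exactly all of its sons in $\mathcal{T}_{\mathcal{J}}$; leaves of $\mathcal{T}_x$ are clusters without sons in $\mathcal{T}_x$. A block tree $\mathcal{T}_{\mathcal{I}\times\mathcal{J}}$ for $\mathcal{T}_{\mathcal{I}}$ and $\mathcal{T}_{\mathcal{J}}$ is a finite rooted tree whose nodes (blocks) are pairs $b=(t,s)$ with $t\in\mathcal{T}_{\mathcal{I}}$, $s\in\mathcal{T}_{\mathcal{J}}$ and label $\hat t\times\hat s$, whose root is $(\mathrm{root}(\mathcal{T}_{\mathcal{I}}),\mathrm{root}(\mathcal{T}_{\mathcal{J}}))$, and such that every non-leaf block $(t,s)$ has sons $\mathrm{sons}(t)\times\mathrm{sons}(s)$ (both nonempty). It is $C_{\mathrm{sp}}$-sparse if $\#\{s:(t,s)\in\mathcal{T}_{\mathcal{I}\times\mathcal{J}}\}\le C_{\mathrm{sp}}$ for all $t\in\mathcal{T}_{\mathcal{I}}$ and $\#\{t:(t,s)\in\mathcal{T}_{\mathcal{I}\times\mathcal{J}}\}\le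 C_{\mathrm{sp}}$ for all $s\in\mathcal{T}_{\mathcal{J}}$. *)

theory Defs
  imports Main "HOL-Library.Disjoint_Sets"
begin

definition is_tree :: "'c set \<Rightarrow> 'c \<Rightarrow> ('c \<Rightarrow> 'c set) \<Rightarrow> bool" where
  "is_tree T r sons \<longleftrightarrow>
     finite T \<and> r \<in> T \<and> (\<forall>t\<in>T. sons t \<subseteq> T) \<and>
     (\<forall>t\<in>T. r \<notin> sons t) \<and>
     (\<forall>t\<in>T. t \<noteq> r \<longrightarrow> (\<exists>!p. p \<in> T \<and> t \<in> sons p)) \<and>
     (\<forall>t\<in>T. (r, t) \<in> {(a, b). a \<in> T \<and> b \<in> sons a}\<^sup>*)"

definition cluster_tree :: "'i set \<Rightarrow> 'c set \<Rightarrow> 'c \<Rightarrow> ('c \<Rightarrow> 'c set) \<Rightarrow> ('c \<Rightarrow> 'i set) \<Rightarrow> bool" where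
  "cluster_tree I T r sons lbl \<longleftrightarrow>
     finite I \<and> is_tree T r sons \<and> lbl r = I \<and>
     (\<forall>t\<in>T. sons t \<noteq> {} \<longrightarrow>
        lbl t = (\<Union>t'\<in>sons t. lbl t') \<and> disjoint_family_on lbl (sons t))"

definition subtree :: "'c set \<Rightarrow> 'c \<Rightarrow> ('c \<Rightarrow> 'c set) \<Rightarrow> 'c set \<Rightarrow> bool" where
  "subtree T r sons S \<longleftrightarrow>
     S \<subseteq> T \<and> is_tree S r (\<lambda>t. sons t \<inter> S) \<and>
     (\<forall>t\<in>S. sons t \<inter> S = {} \<or> sons t \<subseteq> S)"

definition bsons :: "('c \<Rightarrow> 'c set) \<Rightarrow> ('d \<Rightarrow> 'd set) \<Rightarrow> ('c \<times> 'd) set \<Rightarrow> 'c \<times> 'd \<Rightarrow> ('c \<times> 'd) set" where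
  "bsons sonsI sonsJ BT b = (sonsI (fst b) \<times> sonsJ (snd b)) \<inter> BT"

definition block_tree ::
  "'c set \<Rightarrow> 'c \<Rightarrow> ('c \<Rightarrow> 'c set) \<Rightarrow> 'd set \<Rightarrow> 'd \<Rightarrow> ('d \<Rightarrow> 'd set) \<Rightarrow> ('c \<times> 'd) set \<Rightarrow> bool" where
  "block_tree TI rI sonsI TJ rJ sonsJ BT \<longleftrightarrow>
     BT \<subseteq> TI \<times> TJ \<and> is_tree BT (rI, rJ) (bsons sonsI sonsJ BT) \<and>
     (\<forall>b\<in>BT. bsons sonsI sonsJ BT b = {} \<or>
        (sonsI (fst b) \<noteq> {} \<and> sonsJ (snd b) \<noteq> {} \<and>
         bsons sonsI sonsJ BT b = sonsI (fst b) \<times> sonsJ (snd b)))"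

definition sparse :: "nat \<Rightarrow> 'c set \<Rightarrow> 'd set \<Rightarrow> ('c \<times> 'd) set \<Rightarrow> bool" where
  "sparse Csp TI TJ BT \<longleftrightarrow>
     (\<forall>t\<in>TI. card {s. (t, s) \<in> BT} \<le> Csp) \<and> (\<forall>s\<in>TJ. card {t. (t, s) \<in> BT} \<le> Csp)"

inductive_set Bset for rI :: 'c and rJ :: 'd and sonsI sonsJ and BT :: "('c \<times> 'd) set"
  and Tx :: "'d set" where
  root: "(rI, rJ) \<in> Bset rI rJ sonsI sonsJ BT Tx"
| step: "\<lbrakk>(t, s) \<in> Bset rI rJ sonsI sonsJ BT Tx; bsons sonsI sonsJ BT (t, s) \<noteq> {};
          sonsJ s \<inter> Tx \<noteq> {}; b' \<in> bsons sonsI sonsJ BT (t, s)\<rbrakk>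
         \<Longrightarrow> b' \<in> Bset rI rJ sonsI sonsJ BT Tx"

end

theory Submission
  imports Defs
begin

theorem mainTheorem6:
  fixes I :: "'i set" and J :: "'j set"
    and TI :: "'c set" and rI :: 'c and sonsI :: "'c \<Rightarrow> 'c set" and lblI :: "'c \<Rightarrow> 'i set"
    and TJ :: "'d set" and rJ :: 'd and sonsJ :: "'d \<Rightarrow> 'd set" and lblJ :: "'d \<Rightarrow> 'j set"
    and BT :: "('c \<times> 'd) set" and Tx :: "'d set" and Csp :: nat
  assumes "cluster_tree I TI rI sonsI lblI"
    and "cluster_tree J TJ rJ sonsJ lblJ"
    and "block_tree TI rI sonsI TJ rJ sonsJ BT"
    and "sparse Csp TI TJ BT"
    and "subtree TJ rJ sonsJ Tx"
  defines "B \<equiv> Bset rI rJ sonsI sonsJ BT Tx"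
    and "Ty \<equiv> {t. \<exists>s. (t, s) \<in> Bset rI rJ sonsI sonsJ BT Tx}"
  shows "(\<forall>(t, s)\<in>B. s \<in> Tx) \<and> subtree TI rI sonsI Ty \<and>
         card B \<le> Csp * card Tx \<and> card Ty \<le> Csp * card Tx"
proof -
  have TIt: "is_tree TI rI sonsI" using assms(1) unfolding cluster_tree_def by blast
  have BTt: "is_tree BT (rI, rJ) (bsons sonsI sonsJ BT)" and BTsub: "BT \<subseteq> TI \<times> TJ"
    and BTl: "\<forall>b\<in>BT. bsons sonsI sonsJ BT b = {} \<or>
        (sonsI (fst b) \<noteq> {} \<and> sonsJ (snd b) \<noteq> {} \<and>
         bsons sonsI sonsJ BT b = sonsI (fst b) \<times> sonsJ (snd b))"
    using assms(3) unfolding block_tree_def by blast+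
  have Txs: "Tx \<subseteq> TJ" and Txt: "is_tree Tx rJ (\<lambda>t. sonsJ t \<inter> Tx)"
    and Txc: "\<forall>t\<in>Tx. sonsJ t \<inter> Tx = {} \<or> sonsJ t \<subseteq> Tx"
    using assms(5) unfolding subtree_def by blast+
  have finTI: "finite TI" and rITI: "rI \<in> TI" and rInot: "\<forall>t\<in>TI. rI \<notin> sonsI t"
    and uniqI: "\<forall>t\<in>TI. t \<noteq> rI \<longrightarrow> (\<exists>!p. p \<in> TI \<and> t \<in> sonsI p)"
    using TIt unfolding is_tree_def by blast+
  have finBT: "finite BT" and rBT: "(rI, rJ) \<in> BT"
    using BTt unfolding is_tree_def by blast+
  have finTx: "finite Tx" and rTx: "rJ \<in> Tx" using Txt unfolding is_tree_def by blast+
  have sp: "\<forall>s\<in>TJ. card {t. (t, s) \<in> BT} \<le> Csp" using assms(4) unfolding sparse_def by blast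
  have BinBT: "b \<in> BT \<and> snd b \<in> Tx" if "b \<in> B" for b
    using that unfolding B_def
  proof (induction rule: Bset.induct)
    case root then show ?case using rBT rTx by simp
  next
    case (step t s b')
    then have "sonsJ s \<subseteq> Tx" using Txc by auto
    then show ?case using step.hyps(4) by (auto simp: bsons_def)
  qed
  have P1: "\<forall>(t, s)\<in>B. s \<in> Tx" using BinBT by fastforce
  have memTy: "t \<in> Ty \<longleftrightarrow> (\<exists>s. (t, s) \<in> B)" for t by (simp add: Ty_def B_def)
  have TyB: "Ty = fst ` B" using memTy by (auto simp: image_iff) (metis fst_conv)
  have TyTI: "Ty \<subseteq> TI" using BinBT BTsub memTy by fastforce
  have par: "\<exists>t' s'. (t', s') \<in> B \<and> t \<in> sonsI t' \<and> bsons sonsI sonsJ BT (t', s') \<noteq> {}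
               \<and> sonsJ s' \<inter> Tx \<noteq> {} \<and> (t, s) \<in> bsons sonsI sonsJ BT (t', s')"
    if "(t, s) \<in> B" "t \<noteq> rI" for t s
    using that unfolding B_def
  proof (induction rule: Bset.cases)
    case root then show ?case by simp
  next
    case (step t0 s0 b')
    then show ?case by (auto simp: bsons_def)
  qed
  have reach: "(rI, fst b) \<in> {(a, c). a \<in> Ty \<and> c \<in> sonsI a \<inter> Ty}\<^sup>*" if "b \<in> B" for b
    using that unfolding B_def
  proof (induction rule: Bset.induct)
    case root then show ?case by simp
  next
    case (step t s b')
    have "fst b' \<in> sonsI t" using step.hyps(4) by (auto simp: bsons_def)
    moreover have "t \<in> Ty" using step(1) unfolding Ty_def by blast
    moreover have "b' \<in> Bset rI rJ sonsI sonsJ BT Tx"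
      using Bset.step[OF step.hyps(1-4)] .
    then have "fst b' \<in> Ty" unfolding Ty_def by (metis (mono_tags, lifting) mem_Collect_eq prod.collapse)
    ultimately show ?case using step.IH by (auto intro: rtrancl.rtrancl_into_rtrancl)
  qed
  have rTy: "rI \<in> Ty" using memTy[of rI] Bset.root[of rI rJ sonsI sonsJ BT Tx] unfolding B_def by blast
  have closed: "sonsI t \<inter> Ty = {} \<or> sonsI t \<subseteq> Ty" if "t \<in> Ty" for t
  proof (rule ccontr)
    assume neg: "\<not> (sonsI t \<inter> Ty = {} \<or> sonsI t \<subseteq> Ty)"
    then obtain t1 where t1: "t1 \<in> sonsI t" "t1 \<in> Ty" by blast
    then obtain s1 where s1: "(t1, s1) \<in> B" using memTy by blast
    have tTI: "t \<in> TI" using that TyTI by blast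
    have t1r: "t1 \<noteq> rI" using rInot tTI t1 by blast
    obtain t' s' where ts: "(t', s') \<in> B" "t1 \<in> sonsI t'" "bsons sonsI sonsJ BT (t', s') \<noteq> {}"
      "sonsJ s' \<inter> Tx \<noteq> {}" using par[OF s1 t1r] by blast
    have "t' \<in> TI" using ts(1) memTy TyTI by blast
    moreover have "t1 \<in> TI" using t1 TyTI by blast
    ultimately have "t' = t" using uniqI t1r ts(2) t1(1) tTI by blast
    have bB: "(t', s') \<in> BT" using BinBT ts(1) by blast
    have eq: "bsons sonsI sonsJ BT (t', s') = sonsI t' \<times> sonsJ s'" "sonsJ s' \<noteq> {}"
      using BTl bB ts(3) by fastforce+
    have "sonsI t \<subseteq> Ty"
    proof
      fix x assume "x \<in> sonsI t"
      obtain y where "y \<in> sonsJ s'" using eq(2) by blast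
      then have "(x, y) \<in> bsons sonsI sonsJ BT (t', s')" using eq(1) \<open>x \<in> sonsI t\<close> \<open>t' = t\<close> by simp
      then have "(x, y) \<in> B" using ts unfolding B_def by (blast intro: Bset.step)
      then show "x \<in> Ty" using memTy by blast
    qed
    then show False using neg by blast
  qed
  have P2: "subtree TI rI sonsI Ty"
    unfolding subtree_def is_tree_def
  proof (intro conjI ballI impI)
    show "Ty \<subseteq> TI" by (rule TyTI)
    show "finite Ty" using TyTI finTI finite_subset by blast
    show "rI \<in> Ty" by (rule rTy)
  next
    fix t assume "t \<in> Ty" then show "sonsI t \<inter> Ty \<subseteq> Ty" by blast
  next
    fix t assume "t \<in> Ty" then show "rI \<notin> sonsI t \<inter> Ty" using TyTI rInot by blast
  next
    fix t assume t: "t \<in> Ty" "t \<noteq> rI"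
    then obtain s where s: "(t, s) \<in> B" using memTy by blast
    obtain t' s' where ts: "(t', s') \<in> B" "t \<in> sonsI t'" using par[OF s t(2)] by blast
    have t'Ty: "t' \<in> Ty" using ts(1) memTy by blast
    show "\<exists>!p. p \<in> Ty \<and> t \<in> sonsI p \<inter> Ty"
    proof (rule ex1I[of _ t'])
      show "t' \<in> Ty \<and> t \<in> sonsI t' \<inter> Ty" using t'Ty ts t by blast
    next
      fix p assume "p \<in> Ty \<and> t \<in> sonsI p \<inter> Ty"
      then show "p = t'" using uniqI TyTI t t'Ty ts(2) by blast
    qed
  next
    fix t assume "t \<in> Ty"
    then obtain s where s: "(t, s) \<in> B" using memTy by blast
    show "(rI, t) \<in> {(a, b). a \<in> Ty \<and> b \<in> sonsI a \<inter> Ty}\<^sup>*" using reach[OF s] by simp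
  next
    fix t assume "t \<in> Ty" then show "sonsI t \<inter> Ty = {} \<or> sonsI t \<subseteq> Ty" by (rule closed)
  qed
  have Bsub: "B \<subseteq> (\<Union>s\<in>Tx. (\<lambda>t. (t, s)) ` {t. (t, s) \<in> BT})" using BinBT by force
  have fins: "finite {t. (t, s) \<in> BT}" for s
    using finite_imageI[OF finBT, of fst] by (rule finite_subset[rotated]) force
  have "card B \<le> card (\<Union>s\<in>Tx. (\<lambda>t. (t, s)) ` {t. (t, s) \<in> BT})"
    using Bsub fins finTx by (intro card_mono) auto
  also have "\<dots> \<le> (\<Sum>s\<in>Tx. card ((\<lambda>t. (t, s)) ` {t. (t, s) \<in> BT}))"
    using finTx by (rule card_UN_le)
  also have "\<dots> \<le> (\<Sum>s\<in>Tx. Csp)"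
  proof (rule sum_mono)
    fix s assume "s \<in> Tx"
    then have "card {t. (t, s) \<in> BT} \<le> Csp" using sp Txs by blast
    then show "card ((\<lambda>t. (t, s)) ` {t. (t, s) \<in> BT}) \<le> Csp"
      using card_image_le[OF fins] le_trans by blast
  qed
  also have "\<dots> = Csp * card Tx" by simp
  finally have P3: "card B \<le> Csp * card Tx" .
  have finB: "finite B" using finBT by (rule finite_subset[rotated]) (use BinBT in blast)
  have "card Ty \<le> card B" unfolding TyB using finB by (rule card_image_le)
  then have P4: "card Ty \<le> Csp * card Tx" using P3 by linarith
  show ?thesis using P1 P2 P3 P4 by blast
qed

end
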